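(* Let $X$ be a binary $N\times t$ matrix that is 3-good, let $S\subseteq[t]$ with $|S|=3$, $\mathbf{y}=r(X,S)$, $H=H(X,3,\mathbf{y})=([t],E)$, $L_1=\log_2\log_2 t$, $L_2=3L_1$. Let $G'=([t],E')$ be the graph in which distinct vertices $v_1,v_2$ are adjacent iff at least $L_2$ hyperedges of $E$ contain both; let $E_1\subseteq E$ be the set of hyperedges containing some edge of $G'$ as a subset, and $E_2=E\setminus E_1$. Then there exists a partition of $E_2$ into $M\le 96L_1^2L_2^2$ disjoint sets $E_2=\bigsqcup_{i=1}^M E_{2,i}$ such that: (1) no two distinct intersecting hyperedges lie in the same set, i.e. if $e_1\in E_{2,i}$, $e_2\in E_{2,j}$, $e_1\ne e_2$ and $e_1\cap e_2\neq\emptyset$, then $i\neq j$; (2) if $e_1\in E_{2,i}$, $e_2\in E_{2,j}$, $e_1\ne e_2$, and there is a hyperedge $e\in E$ (from $E_1$ or $E_2$) with $e\cap e_1\neq\emptyset$ and $e\cap e_2\neq\emptyset$, then $i\neq j$.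
   Context: For a binary $N\times t$ matrix $X$ with columns $x(1),\dots,x(t)$ and $S\subseteq[t]$, $r(X,S)=\bigvee_{j\in S}x(j)$ (coordinatewise Boolean OR). For $\mathbf{y}\in\{0,1\}^N$, $H(X,3,\mathbf{y})$ is the $3$-uniform hypergraph on $[t]$ whose hyperedges are all $3$-element $S\subseteq[t]$ with $r(X,S)=\mathbf{y}$. A $(3,k)$ configuration of size $L$ is a set of $L$ hyperedges $e_1,\dots,e_L$ with a set $U$, $|U|=k$, such that $e_i\cap e_j=U$ for all $i\ne j$. Fix $p\in(0,1)$; $\Pr_1(s,w)$ is the probability that the OR of $s$ independent uniformly random length-$N$ binary columns of weight $\lfloor pN\rfloor$ equals a fixed vector of weight $w$; $\Pr_2(s,w_1,w)$ is the probability that the OR of $s$ such columns together with a fixed column $\mathbf{y}_1$ of weight $w_1$ equals a fixed vector $\mathbf{y}$ of weight $w$ with $\mathbf{y}\vee\mathbf{y}_1=\mathbf{y}$. With $L_1=\log_2\log_2 t$, $X$ is 3-good if: (1) for every $\mathbf{y}$, $H(X,3,\mathbf{y})$ has no $(3,1)$ configuration of size $L_1$; (2) for every $\mathbf{y}$ with $|\mathbf{y}|=w$, $H(X,3,\mathbf{y})$ has no $(3,0)$ configuration of size $10\max(t^3\Pr_1(3,w),N)$; (3) for all $\mathbf{y},\mathbf{y}_1$ with $\mathbf{y}\vee\mathbf{y}_1=\mathbf{y}$, $|\mathbf{y}_1|=w_1$, $|\mathbf{y}|=w$, the number of $j$ with $\mathbf{y}_1\vee x(j)=\mathbf{y}$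 is less than $10B(N,t)$, where $B(N,t)=t\Pr_2(1,w_1,w)$ if this exceeds $N$, $B(N,t)=N$ if $t^{-1/\sqrt{L_1}}\le t\Pr_2(1,w_1,w)\le N$, and $B(N,t)=L_1/10$ if $t\Pr_2(1,w_1,w)<t^{-1/\sqrt{L_1}}$; (4) for every $\mathbf{y}$ with $|\mathbf{y}|=w$ and integer $w_1\le w$, the number of pairwise disjoint pairs $\{j_1,j_2\}\subseteq[t]$ with $x(j_1)\vee x(j_2)\vee\mathbf{y}=\mathbf{y}$ and $|x(j_1)\vee x(j_2)|=w_1$ is less than $10\max(N,\binom{w}{w_1}t^2\Pr_1(2,w_1))$. *)

theory Defs
  imports Complex_Main "HOL-Library.FuncSet"
begin

text \<open>A binary N x t matrix is a predicate X i j (row i < N, column j < t).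
  Binary vectors of length N are represented by their supports, i.e. subsets of {..<N};
  Boolean OR is union and the weight is the cardinality.\<close>

definition col :: "(nat \<Rightarrow> nat \<Rightarrow> bool) \<Rightarrow> nat \<Rightarrow> nat \<Rightarrow> nat set" where
  "col X N j = {i. i < N \<and> X i j}"

definition rvec :: "(nat \<Rightarrow> nat \<Rightarrow> bool) \<Rightarrow> nat \<Rightarrow> nat set \<Rightarrow> nat set" where
  "rvec X N S = (\<Union>j\<in>S. col X N j)"

definition hyp3 :: "(nat \<Rightarrow> nat \<Rightarrow> bool) \<Rightarrow> nat \<Rightarrow> nat \<Rightarrow> nat set \<Rightarrow> nat set set" where
  "hyp3 X N t y = {S. S \<subseteq> {..<t} \<and> card S = 3 \<and> rvec X N S = y}"

definition has_config :: "nat set set \<Rightarrow> nat \<Rightarrow> real \<Rightarrow> bool" where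
  "has_config E k L = (\<exists>F U. F \<subseteq> E \<and> finite F \<and> real (card F) \<ge> L \<and> card U = k \<and>
      (\<forall>e1\<in>F. \<forall>e2\<in>F. e1 \<noteq> e2 \<longrightarrow> e1 \<inter> e2 = U))"

definition wcols :: "nat \<Rightarrow> nat \<Rightarrow> nat set set" where
  "wcols N k = {A. A \<subseteq> {..<N} \<and> card A = k}"

text \<open>Pr_1(s,w): probability that the OR of s independent uniform weight-k columns
  equals a fixed vector of weight w (taken w.l.o.g. to be {..<w}).\<close>
definition Pr1 :: "nat \<Rightarrow> nat \<Rightarrow> nat \<Rightarrow> nat \<Rightarrow> real" where
  "Pr1 N k s w = real (card {f \<in> {..<s} \<rightarrow>\<^sub>E wcols N k. (\<Union>i<s. f i) = {..<w}})
                 / real (N choose k) ^ s"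

text \<open>Pr_2(s,w1,w): same, with a fixed column y1 of weight w1 included, y1 \<subseteq> y.\<close>
definition Pr2 :: "nat \<Rightarrow> nat \<Rightarrow> nat \<Rightarrow> nat \<Rightarrow> nat \<Rightarrow> real" where
  "Pr2 N k s w1 w = real (card {f \<in> {..<s} \<rightarrow>\<^sub>E wcols N k. {..<w1} \<union> (\<Union>i<s. f i) = {..<w}})
                 / real (N choose k) ^ s"

definition L1 :: "nat \<Rightarrow> real" where
  "L1 t = log 2 (log 2 (real t))"

definition Bfun :: "real \<Rightarrow> nat \<Rightarrow> nat \<Rightarrow> real \<Rightarrow> real" where
  "Bfun P N t Lone =
     (if real t * P > real N then real t * P
      else if real t powr (- 1 / sqrt Lone) \<le> real t * P then real N
      else Lone / 10)"

definition good3 :: "real \<Rightarrow> nat \<Rightarrow> nat \<Rightarrow> (nat \<Rightarrow> nat \<Rightarrow> bool) \<Rightarrow> bool" where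
  "good3 p N t X = (let k = nat \<lfloor>p * real N\<rfloor>; L = L1 t in
     (\<forall>y. y \<subseteq> {..<N} \<longrightarrow> \<not> has_config (hyp3 X N t y) 1 L) \<and>
     (\<forall>y. y \<subseteq> {..<N} \<longrightarrow>
        \<not> has_config (hyp3 X N t y) 0 (10 * max (real t ^ 3 * Pr1 N k 3 (card y)) (real N))) \<and>
     (\<forall>y y1. y \<subseteq> {..<N} \<longrightarrow> y1 \<subseteq> y \<longrightarrow>
        real (card {j. j < t \<and> y1 \<union> col X N j = y})
          < 10 * Bfun (Pr2 N k 1 (card y1) (card y)) N t L) \<and>
     (\<forall>y w1 P. y \<subseteq> {..<N} \<longrightarrow> w1 \<le> card y \<longrightarrow>
        P \<subseteq> {{j1, j2} | j1 j2. j1 < t \<and> j2 < t \<and> j1 \<noteq> j2 \<and>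
                 col X N j1 \<union> col X N j2 \<subseteq> y \<and> card (col X N j1 \<union> col X N j2) = w1} \<longrightarrow>
        (\<forall>a\<in>P. \<forall>b\<in>P. a \<noteq> b \<longrightarrow> a \<inter> b = {}) \<longrightarrow>
        real (card P) < 10 * max (real N) (real (card y choose w1) * real t ^ 2 * Pr1 N k 2 w1)))"

end

theory Submission
  imports Defs
begin

lemma color_lemma:
  fixes A :: "'a set" and Out :: "'a \<Rightarrow> 'a set" and c :: "'a \<Rightarrow> 'a \<Rightarrow> bool" and d :: nat
  assumes "finite A"
    and "\<forall>f\<in>A. finite (Out f) \<and> card (Out f) \<le> d"
    and "\<forall>f\<in>A. \<forall>g\<in>A. f \<noteq> g \<and> c f g \<longrightarrow> g \<in> Out f \<or> f \<in> Out g"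
  shows "\<exists>col. (\<forall>f\<in>A. col f < 2*d+1) \<and> (\<forall>f\<in>A. \<forall>g\<in>A. f \<noteq> g \<and> c f g \<longrightarrow> col f \<noteq> col g)"
  using assms
proof (induction A rule: finite_psubset_induct)
  case (psubset A)
  show ?case
  proof (cases "A = {}")
    case True
    then show ?thesis by auto
  next
    case False
    have sw: "(\<Sum>f\<in>A. card {g\<in>A. f \<in> Out g}) = (\<Sum>g\<in>A. card {f\<in>A. f \<in> Out g})"
    proof -
      have "(\<Sum>f\<in>A. card {g\<in>A. f \<in> Out g}) = (\<Sum>f\<in>A. \<Sum>g\<in>A. if f \<in> Out g then 1 else 0)"
        using psubset.hyps by (simp add: sum.inter_filter[symmetric])
      also have "\<dots> = (\<Sum>g\<in>A. \<Sum>f\<in>A. if f \<in> Out g then 1 else 0)"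
        by (rule sum.swap)
      also have "\<dots> = (\<Sum>g\<in>A. card {f\<in>A. f \<in> Out g})"
        using psubset.hyps by (simp add: sum.inter_filter[symmetric])
      finally show ?thesis .
    qed
    have "(\<Sum>g\<in>A. card {f\<in>A. f \<in> Out g}) \<le> (\<Sum>g\<in>A. d)"
    proof (rule sum_mono)
      fix g assume "g \<in> A"
      then have "card {f\<in>A. f \<in> Out g} \<le> card (Out g)"
        using psubset.prems(1) by (intro card_mono) auto
      then show "card {f\<in>A. f \<in> Out g} \<le> d" using psubset.prems(1) \<open>g \<in> A\<close> by fastforce
    qed
    then have sumle: "(\<Sum>f\<in>A. card {g\<in>A. f \<in> Out g}) \<le> card A * d" using sw by simp
    have "\<exists>f0\<in>A. card {g\<in>A. f0 \<in> Out g} \<le> d"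
    proof (rule ccontr)
      assume "\<not> ?thesis"
      then have "\<forall>f\<in>A. d < card {g\<in>A. f \<in> Out g}" by auto
      then have "(\<Sum>f\<in>A. d) < (\<Sum>f\<in>A. card {g\<in>A. f \<in> Out g})"
        using False psubset.hyps by (intro sum_strict_mono) auto
      then show False using sumle by (simp add: mult.commute)
    qed
    then obtain f0 where f0: "f0 \<in> A" "card {g\<in>A. f0 \<in> Out g} \<le> d" by blast
    have "A - {f0} \<subset> A" using f0 by auto
    from psubset.IH[OF this] psubset.prems obtain col where
      col: "\<forall>f\<in>A-{f0}. col f < 2*d+1"
      "\<forall>f\<in>A-{f0}. \<forall>g\<in>A-{f0}. f \<noteq> g \<and> c f g \<longrightarrow> col f \<noteq> col g" by force
    define Bad where "Bad = col ` (Out f0 \<union> {g\<in>A. f0 \<in> Out g})"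
    have "card Bad \<le> card (Out f0 \<union> {g\<in>A. f0 \<in> Out g})"
      unfolding Bad_def by (rule card_image_le) (use psubset.prems(1) f0 psubset.hyps in auto)
    also have "\<dots> \<le> card (Out f0) + card {g\<in>A. f0 \<in> Out g}" by (rule card_Un_le)
    also have "\<dots> \<le> 2*d" using f0 psubset.prems(1) by fastforce
    finally have cB: "card Bad < card {..<2*d+1}" by simp
    have fB: "finite Bad" unfolding Bad_def using psubset.prems(1) f0 psubset.hyps by auto
    have "\<not> {..<2*d+1} \<subseteq> Bad"
    proof
      assume "{..<2*d+1} \<subseteq> Bad"
      then have "card {..<2*d+1} \<le> card Bad" using fB by (rule card_mono[rotated])
      then show False using cB by simp
    qed
    then obtain k where k: "k \<in> {..<2*d+1}" "k \<notin> Bad" by blast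
    define col' where "col' = col(f0 := k)"
    show ?thesis
    proof (intro exI[of _ col'] conjI ballI impI)
      fix f assume "f \<in> A" then show "col' f < 2*d+1" using col k by (auto simp: col'_def)
    next
      fix f g assume fg: "f \<in> A" "g \<in> A" "f \<noteq> g \<and> c f g"
      show "col' f \<noteq> col' g"
      proof (cases "f = f0")
        case True
        then have "g \<in> Out f0 \<or> f0 \<in> Out g" using fg psubset.prems(2) by blast
        then have "col g \<in> Bad" using fg unfolding Bad_def by auto
        then show ?thesis using True fg k by (auto simp: col'_def)
      next
        case False
        show ?thesis
        proof (cases "g = f0")
          case True
          then have "g \<in> Out f \<or> f \<in> Out g" using fg psubset.prems(2) by blast
          then have "col f \<in> Bad" using fg True unfolding Bad_def by auto
          then show ?thesis using True False fg k by (auto simp: col'_def)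
        next
          case False2: False
          then show ?thesis using False fg col(2) by (auto simp: col'_def)
        qed
      qed
    qed
  qed
qed

lemma comb_main:
  fixes E :: "nat set set" and l L2 :: real and adj :: "nat \<Rightarrow> nat \<Rightarrow> bool"
  assumes finE: "finite E" and card3: "\<forall>e\<in>E. card e = 3"
    and noconf: "\<forall>F z. F \<subseteq> E \<longrightarrow> (\<forall>e1\<in>F. \<forall>e2\<in>F. e1 \<noteq> e2 \<longrightarrow> e1 \<inter> e2 = {z}) \<longrightarrow> real (card F) < l"
    and l1: "l > 1" and L2: "L2 = 3 * l"
    and adj: "adj = (\<lambda>v1 v2. v1 \<noteq> v2 \<and> real (card {e \<in> E. v1 \<in> e \<and> v2 \<in> e}) \<ge> L2)"
    and E1: "E1 = {e \<in> E. \<exists>v1 v2. v1 \<in> e \<and> v2 \<in> e \<and> adj v1 v2}"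
    and E2: "E2 = E - E1"
  shows "\<exists>M::nat. \<exists>Es :: nat \<Rightarrow> nat set set.
           real M \<le> 96 * l^2 * L2^2 \<and>
           (\<Union>i<M. Es i) = E2 \<and>
           (\<forall>i<M. \<forall>j<M. i \<noteq> j \<longrightarrow> Es i \<inter> Es j = {}) \<and>
           (\<forall>i<M. \<forall>j<M. \<forall>e1\<in>Es i. \<forall>e2\<in>Es j.
              e1 \<noteq> e2 \<and> e1 \<inter> e2 \<noteq> {} \<longrightarrow> i \<noteq> j) \<and>
           (\<forall>i<M. \<forall>j<M. \<forall>e1\<in>Es i. \<forall>e2\<in>Es j. \<forall>e\<in>E.
              e1 \<noteq> e2 \<and> e \<inter> e1 \<noteq> {} \<and> e \<inter> e2 \<noteq> {} \<longrightarrow> i \<noteq> j)"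
proof -
  have fine: "\<And>e. e \<in> E \<Longrightarrow> finite e" using card3 by (metis card.infinite zero_neq_numeral)
  define Fam where "Fam z = {F. F \<subseteq> E \<and> (\<forall>e\<in>F. z \<in> e) \<and> (\<forall>e1\<in>F. \<forall>e2\<in>F. e1 \<noteq> e2 \<longrightarrow> e1 \<inter> e2 = {z})}" for z
  have "\<forall>z. \<exists>P. P \<in> Fam z \<and> (\<forall>Q\<in>Fam z. P \<subseteq> Q \<longrightarrow> P = Q)"
  proof
    fix z
    have "finite (Fam z)" unfolding Fam_def using finE by (rule rev_finite_subset[OF finite_Pow_iff[THEN iffD2]]) auto
    moreover have "{} \<in> Fam z" unfolding Fam_def by auto
    ultimately show "\<exists>P. P \<in> Fam z \<and> (\<forall>Q\<in>Fam z. P \<subseteq> Q \<longrightarrow> P = Q)"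
      using finite_has_maximal[of "Fam z"] by blast
  qed
  then obtain P where P: "\<And>z. P z \<in> Fam z" "\<And>z Q. Q \<in> Fam z \<Longrightarrow> P z \<subseteq> Q \<Longrightarrow> P z = Q" by metis
  have PE: "P z \<subseteq> E" for z using P(1)[of z] unfolding Fam_def by auto
  have finP: "finite (P z)" for z using PE finE by (rule finite_subset)
  have cardP: "real (card (P z)) < l" for z using noconf P(1)[of z] unfolding Fam_def by auto
  define C where "C z = \<Union>(P z) - {z}" for z
  have finC: "finite (C z)" for z unfolding C_def using finP PE fine by (intro finite_Diff finite_Union) auto
  have cardC: "real (card (C z)) \<le> 2 * l" for z
  proof -
    have "C z = (\<Union>e\<in>P z. e - {z})" unfolding C_def by auto
    then have "card (C z) \<le> (\<Sum>e\<in>P z. card (e - {z}))" using card_UN_le[OF finP, of "\<lambda>e. e - {z}" z] by simp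
    also have "\<dots> = (\<Sum>e\<in>P z. 2)"
    proof (rule sum.cong)
      fix e assume "e \<in> P z"
      then have "e \<in> E" "z \<in> e" using PE P(1)[of z] unfolding Fam_def by auto
      then show "card (e - {z}) = 2" using card3 fine by (simp add: card_Diff_singleton)
    qed simp
    finally have "card (C z) \<le> 2 * card (P z)" by simp
    then show ?thesis using cardP[of z] by linarith
  qed
  have Ccov: "\<exists>x\<in>h. x \<noteq> z \<and> x \<in> C z" if h: "h \<in> E" "z \<in> h" for h z
  proof (rule ccontr)
    assume nc: "\<not> ?thesis"
    have "insert h (P z) \<in> Fam z"
    proof -
      have "h \<inter> e = {z}" if "e \<in> P z" for e
      proof -
        have "z \<in> e" using that P(1)[of z] unfolding Fam_def by auto
        moreover have "x \<notin> e" if "x \<in> h" "x \<noteq> z" for x using nc that \<open>e \<in> P z\<close> unfolding C_def by auto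
        ultimately show ?thesis using h by auto
      qed
      then show ?thesis using P(1)[of z] h unfolding Fam_def by auto
    qed
    then have "insert h (P z) = P z" using P(2) by blast
    then have "h \<in> P z" by auto
    moreover obtain x where "x \<in> h" "x \<noteq> z"
    proof -
      have "card h = 3" using card3 h by auto
      then have "\<not> h \<subseteq> {z}" using card_mono[of "{z}" h] by auto
      then show ?thesis using that by auto
    qed
    ultimately show False using nc unfolding C_def by auto
  qed
  have lpos: "L2 > 0" using L2 l1 by simp
  have D2: "real (card {f\<in>E2. b \<in> f}) \<le> 2 * l * L2" for b
  proof -
    have sub: "{f\<in>E2. b \<in> f} \<subseteq> (\<Union>x\<in>C b. {f\<in>E2. b \<in> f \<and> x \<in> f})"
      using Ccov E2 by fastforce
    have each: "real (card {f\<in>E2. b \<in> f \<and> x \<in> f}) \<le> L2" if "x \<in> C b" for x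
    proof (cases "{f\<in>E2. b \<in> f \<and> x \<in> f} = {}")
      case True then show ?thesis using lpos by (subst True) simp
    next
      case False
      then obtain f where f: "f \<in> E2" "b \<in> f" "x \<in> f" by auto
      have "x \<noteq> b" using that unfolding C_def by auto
      then have "\<not> adj b x" using f E1 E2 by auto
      then have "real (card {e \<in> E. b \<in> e \<and> x \<in> e}) < L2" using \<open>x \<noteq> b\<close> adj by auto
      moreover have "card {f\<in>E2. b \<in> f \<and> x \<in> f} \<le> card {e \<in> E. b \<in> e \<and> x \<in> e}"
        using E2 finE by (intro card_mono) auto
      ultimately show ?thesis by linarith
    qed
    have "card {f\<in>E2. b \<in> f} \<le> card (\<Union>x\<in>C b. {f\<in>E2. b \<in> f \<and> x \<in> f})"
      using sub finC by (intro card_mono) (auto intro!: finite_subset[OF _ finE] simp: E2)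
    also have "\<dots> \<le> (\<Sum>x\<in>C b. card {f\<in>E2. b \<in> f \<and> x \<in> f})" by (rule card_UN_le[OF finC])
    finally have "real (card {f\<in>E2. b \<in> f}) \<le> real (\<Sum>x\<in>C b. card {f\<in>E2. b \<in> f \<and> x \<in> f})"
      by (simp only: of_nat_le_iff)
    also have "\<dots> = (\<Sum>x\<in>C b. real (card {f\<in>E2. b \<in> f \<and> x \<in> f}))" by (rule of_nat_sum)
    also have "\<dots> \<le> real (card (C b)) * L2" by (rule sum_bounded_above) (use each in auto)
    also have "\<dots> \<le> 2 * l * L2" using cardC[of b] lpos by (intro mult_right_mono) auto
    finally show ?thesis .
  qed
  define Ov where "Ov z = insert z (C z \<union> (\<Union>c\<in>C z. C c))" for z
  have finO: "finite (Ov z)" for z unfolding Ov_def using finC by auto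
  have cardO: "real (card (Ov z)) \<le> 1 + 2*l + 4*l^2" for z
  proof -
    have "card (Ov z) \<le> Suc (card (C z \<union> (\<Union>c\<in>C z. C c)))" unfolding Ov_def by (rule card_insert_le_m1) auto
    also have "card (C z \<union> (\<Union>c\<in>C z. C c)) \<le> card (C z) + card (\<Union>c\<in>C z. C c)" by (rule card_Un_le)
    also have "card (\<Union>c\<in>C z. C c) \<le> (\<Sum>c\<in>C z. card (C c))" by (rule card_UN_le[OF finC])
    finally have "card (Ov z) \<le> 1 + card (C z) + (\<Sum>c\<in>C z. card (C c))" by simp
    then have "real (card (Ov z)) \<le> real (1 + card (C z) + (\<Sum>c\<in>C z. card (C c)))"
      by (simp only: of_nat_le_iff)
    also have "\<dots> = 1 + real (card (C z)) + (\<Sum>c\<in>C z. real (card (C c)))" by (simp add: of_nat_sum)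
    also have "(\<Sum>c\<in>C z. real (card (C c))) \<le> real (card (C z)) * (2*l)" by (rule sum_bounded_above) (use cardC in auto)
    also have "\<dots> \<le> (2*l) * (2*l)" using cardC[of z] l1 by (intro mult_right_mono) auto
    finally show ?thesis using cardC[of z] by (simp add: power2_eq_square)
  qed
  have key: "b \<in> Ov a \<or> a \<in> Ov b" if ea: "e \<in> E" "a \<in> e" "b \<in> e" for e a b
  proof (cases "a = b")
    case True then show ?thesis unfolding Ov_def by auto
  next
    case False
    obtain x where x: "x \<in> e" "x \<noteq> a" "x \<in> C a" using Ccov[OF ea(1) ea(2)] by blast
    obtain y where y: "y \<in> e" "y \<noteq> b" "y \<in> C b" using Ccov[OF ea(1) ea(3)] by blast
    show ?thesis
    proof (cases "x = b \<or> y = a")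
      case True then show ?thesis using x y unfolding Ov_def by auto
    next
      case False
      have c3: "card e = 3" using card3 ea by auto
      have "x = y"
      proof (rule ccontr)
        assume "x \<noteq> y"
        then have s4: "{a,b,x,y} \<subseteq> e" "card {a,b,x,y} = 4" using x y False \<open>a \<noteq> b\<close> ea by auto
        have "card {a,b,x,y} \<le> card e" by (rule card_mono[OF fine[OF ea(1)] s4(1)])
        then show False using c3 s4(2) by simp
      qed
      obtain w where w: "w \<in> e" "w \<noteq> x" "w \<in> C x" using Ccov[OF ea(1) x(1)] by blast
      have "w = a \<or> w = b"
      proof (rule ccontr)
        assume "\<not> ?thesis"
        then have s4: "{a,b,x,w} \<subseteq> e" "card {a,b,x,w} = 4" using x y w False \<open>a \<noteq> b\<close> \<open>x = y\<close> ea by auto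
        have "card {a,b,x,w} \<le> card e" by (rule card_mono[OF fine[OF ea(1)] s4(1)])
        then show False using c3 s4(2) by simp
      qed
      then show ?thesis using w x y \<open>x = y\<close> unfolding Ov_def by auto
    qed
  qed
  define Out where "Out f = (\<Union>a\<in>f. \<Union>b\<in>Ov a. {g\<in>E2. b \<in> g})" for f
  define B where "B = 3 * (1 + 2*l + 4*l^2) * (2*l*L2)"
  define d where "d = nat \<lfloor>B\<rfloor>"
  have outb: "finite (Out f) \<and> card (Out f) \<le> d" if "f \<in> E2" for f
  proof
    have fE: "f \<in> E" using that E2 by auto
    show "finite (Out f)" unfolding Out_def using finE E2 by (auto intro: finite_subset)
    have "card (Out f) \<le> (\<Sum>a\<in>f. card (\<Union>b\<in>Ov a. {g\<in>E2. b \<in> g}))"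
      unfolding Out_def by (rule card_UN_le[OF fine[OF fE]])
    also have "\<dots> \<le> (\<Sum>a\<in>f. \<Sum>b\<in>Ov a. card {g\<in>E2. b \<in> g})"
      by (rule sum_mono, rule card_UN_le[OF finO])
    finally have "real (card (Out f)) \<le> real (\<Sum>a\<in>f. \<Sum>b\<in>Ov a. card {g\<in>E2. b \<in> g})"
      by (simp only: of_nat_le_iff)
    also have "\<dots> = (\<Sum>a\<in>f. \<Sum>b\<in>Ov a. real (card {g\<in>E2. b \<in> g}))" by (simp add: of_nat_sum)
    also have "\<dots> \<le> (\<Sum>a\<in>f. (1 + 2*l + 4*l^2) * (2*l*L2))"
    proof (rule sum_mono)
      fix a
      have "(\<Sum>b\<in>Ov a. real (card {g\<in>E2. b \<in> g})) \<le> real (card (Ov a)) * (2*l*L2)"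
        by (rule sum_bounded_above) (use D2 in auto)
      also have "\<dots> \<le> (1 + 2*l + 4*l^2) * (2*l*L2)"
        using cardO[of a] l1 lpos by (intro mult_right_mono) auto
      finally show "(\<Sum>b\<in>Ov a. real (card {g\<in>E2. b \<in> g})) \<le> (1 + 2*l + 4*l^2) * (2*l*L2)" .
    qed
    also have "\<dots> = B" using card3 fE unfolding B_def by simp
    finally show "card (Out f) \<le> d" unfolding d_def by (rule le_nat_floor)
  qed
  define cf where "cf f g = (\<exists>e\<in>E. e \<inter> f \<noteq> {} \<and> e \<inter> g \<noteq> {})" for f g
  have confl: "\<forall>f\<in>E2. \<forall>g\<in>E2. f \<noteq> g \<and> cf f g \<longrightarrow> g \<in> Out f \<or> f \<in> Out g"
  proof (intro ballI impI)
    fix f g assume fg: "f \<in> E2" "g \<in> E2" "f \<noteq> g \<and> cf f g"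
    then obtain e a b where "e \<in> E" "a \<in> e" "a \<in> f" "b \<in> e" "b \<in> g" unfolding cf_def by blast
    then show "g \<in> Out f \<or> f \<in> Out g" using key[of e a b] fg unfolding Out_def by blast
  qed
  have finE2: "finite E2" using finE E2 by auto
  obtain col where col: "\<forall>f\<in>E2. col f < 2*d+1" "\<forall>f\<in>E2. \<forall>g\<in>E2. f \<noteq> g \<and> cf f g \<longrightarrow> col f \<noteq> col g"
    using color_lemma[OF finE2, of Out d cf] outb confl by blast
  define M where "M = 2*d+1"
  define Es where "Es i = {f\<in>E2. col f = i}" for i
  have Mb: "real M \<le> 96 * l^2 * L2^2"
  proof -
    have "real d \<le> B" unfolding d_def using l1 lpos B_def by (simp add: mult_nonneg_nonneg)
    then have "real M \<le> 2*B + 1" unfolding M_def by simp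
    also have "2*B + 1 = 36*l^2 + 72*l^3 + 144*l^4 + 1" unfolding B_def L2 by (simp add: algebra_simps power2_eq_square power3_eq_cube power4_eq_xxxx)
    also have "\<dots> \<le> 864 * l^4"
    proof -
      have "l^2 \<le> l^4" "l^3 \<le> l^4" "1 \<le> l^4" using l1 by (auto intro: power_increasing one_le_power)
      then show ?thesis by linarith
    qed
    also have "\<dots> = 96 * l^2 * L2^2" unfolding L2 by (simp add: power2_eq_square power4_eq_xxxx)
    finally show ?thesis .
  qed
  have E2E: "E2 \<subseteq> E" using E2 by auto
  have ne: "f \<inter> f \<noteq> {}" if "f \<in> E2" for f using that E2E card3 by fastforce
  show ?thesis
  proof (intro exI[of _ M] exI[of _ Es] conjI)
    show "real M \<le> 96 * l^2 * L2^2" by (rule Mb)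
    show "(\<Union>i<M. Es i) = E2" using col(1) unfolding Es_def M_def by auto
    show "\<forall>i<M. \<forall>j<M. i \<noteq> j \<longrightarrow> Es i \<inter> Es j = {}" unfolding Es_def by auto
    show "\<forall>i<M. \<forall>j<M. \<forall>e1\<in>Es i. \<forall>e2\<in>Es j. e1 \<noteq> e2 \<and> e1 \<inter> e2 \<noteq> {} \<longrightarrow> i \<noteq> j"
    proof (intro allI impI ballI)
      fix i j e1 e2 assume h: "i < M" "j < M" "e1 \<in> Es i" "e2 \<in> Es j" "e1 \<noteq> e2 \<and> e1 \<inter> e2 \<noteq> {}"
      then have "cf e1 e2" using ne E2E unfolding cf_def Es_def by blast
      then show "i \<noteq> j" using h col(2) unfolding Es_def by auto
    qed
    show "\<forall>i<M. \<forall>j<M. \<forall>e1\<in>Es i. \<forall>e2\<in>Es j. \<forall>e\<in>E. e1 \<noteq> e2 \<and> e \<inter> e1 \<noteq> {} \<and> e \<inter> e2 \<noteq> {} \<longrightarrow> i \<noteq> j"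
    proof (intro allI impI ballI)
      fix i j e1 e2 e assume h: "i < M" "j < M" "e1 \<in> Es i" "e2 \<in> Es j" "e \<in> E" "e1 \<noteq> e2 \<and> e \<inter> e1 \<noteq> {} \<and> e \<inter> e2 \<noteq> {}"
      then have "cf e1 e2" unfolding cf_def by blast
      then show "i \<noteq> j" using h col(2) unfolding Es_def by auto
    qed
  qed
qed

theorem lemma6:
  fixes p :: real and N t :: nat and X :: "nat \<Rightarrow> nat \<Rightarrow> bool" and S :: "nat set"
  assumes "0 < p" and "p < 1"
    and "good3 p N t X"
    and "S \<subseteq> {..<t}" and "card S = 3"
  defines "E \<equiv> hyp3 X N t (rvec X N S)"
    and "L2 \<equiv> 3 * L1 t"
  defines "adj \<equiv> (\<lambda>v1 v2. v1 \<noteq> v2 \<and> real (card {e \<in> E. v1 \<in> e \<and> v2 \<in> e}) \<ge> L2)"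
  defines "E1 \<equiv> {e \<in> E. \<exists>v1 v2. v1 \<in> e \<and> v2 \<in> e \<and> adj v1 v2}"
  defines "E2 \<equiv> E - E1"
  shows "\<exists>M::nat. \<exists>Es :: nat \<Rightarrow> nat set set.
           real M \<le> 96 * (L1 t)^2 * L2^2 \<and>
           (\<Union>i<M. Es i) = E2 \<and>
           (\<forall>i<M. \<forall>j<M. i \<noteq> j \<longrightarrow> Es i \<inter> Es j = {}) \<and>
           (\<forall>i<M. \<forall>j<M. \<forall>e1\<in>Es i. \<forall>e2\<in>Es j.
              e1 \<noteq> e2 \<and> e1 \<inter> e2 \<noteq> {} \<longrightarrow> i \<noteq> j) \<and>
           (\<forall>i<M. \<forall>j<M. \<forall>e1\<in>Es i. \<forall>e2\<in>Es j. \<forall>e\<in>E.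
              e1 \<noteq> e2 \<and> e \<inter> e1 \<noteq> {} \<and> e \<inter> e2 \<noteq> {} \<longrightarrow> i \<noteq> j)"
proof -
  let ?y = "rvec X N S"
  have finE: "finite E" unfolding E_def hyp3_def
    by (rule finite_subset[of _ "Pow {..<t}"]) auto
  have card3: "\<forall>e\<in>E. card e = 3" unfolding E_def hyp3_def by auto
  have ysub: "?y \<subseteq> {..<N}" unfolding rvec_def col_def by auto
  have g1: "\<forall>y. y \<subseteq> {..<N} \<longrightarrow> \<not> has_config (hyp3 X N t y) 1 (L1 t)"
    using conjunct1[OF assms(3)[unfolded good3_def Let_def]] .
  have nhc: "\<not> has_config E 1 (L1 t)"
    using g1 ysub unfolding E_def by blast
  have noconf: "\<forall>F z. F \<subseteq> E \<longrightarrow> (\<forall>e1\<in>F. \<forall>e2\<in>F. e1 \<noteq> e2 \<longrightarrow> e1 \<inter> e2 = {z}) \<longrightarrow> real (card F) < L1 t"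
  proof (intro allI impI)
    fix F z assume F: "F \<subseteq> E" "\<forall>e1\<in>F. \<forall>e2\<in>F. e1 \<noteq> e2 \<longrightarrow> e1 \<inter> e2 = {z}"
    have "finite F" using F(1) finE by (rule finite_subset)
    show "real (card F) < L1 t"
    proof (rule ccontr)
      assume "\<not> real (card F) < L1 t"
      then have "has_config E 1 (L1 t)" unfolding has_config_def
        using F \<open>finite F\<close> by (intro exI[of _ F] exI[of _ "{z}"]) auto
      then show False using nhc by blast
    qed
  qed
  have SE: "S \<in> E" unfolding E_def hyp3_def using assms(4,5) by auto
  have l1: "L1 t > 1"
  proof (rule ccontr)
    assume "\<not> L1 t > 1"
    then have "has_config E 1 (L1 t)" unfolding has_config_def
      using SE by (intro exI[of _ "{S}"] exI[of _ "{0::nat}"]) auto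
    then show False using nhc by blast
  qed
  show ?thesis
    by (rule comb_main[OF finE card3 noconf l1 meta_eq_to_obj_eq[OF L2_def] meta_eq_to_obj_eq[OF adj_def] meta_eq_to_obj_eq[OF E1_def] meta_eq_to_obj_eq[OF E2_def]])
qed

end
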